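(* Let $a_1,\dots,a_n$ and $b_1,\dots,b_n$ be complex numbers with all $a_i\ne0$, and let $a=\sum_{i=1}^n a_i$, $b=\sum_{i=1}^n b_i$. Suppose that for some reals $1>\tau>\epsilon>0$ we have $$\left|\frac{b_i}{a_i}-1\right|\le\epsilon\ \ (i=1,\dots,n)\qquad\text{and}\qquad |a|\ge\tau\sum_{i=1}^n|a_i|.$$ Then $a\ne0$, $b\ne0$, and the angle between $a$ and $b$ (as vectors in $\mathbb{R}^2\cong\mathbb{C}$) does not exceed $\arcsin\frac{\epsilon}{\tau}$. *)

theory Defs
  imports "HOL-Analysis.Analysis"
begin

definition vec_angle :: "'a::real_inner \<Rightarrow> 'a \<Rightarrow> real" where
  "vec_angle x y = arccos (inner x y / (norm x * norm y))"

end

theory Submission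
  imports Defs
begin

lemma angle_helper:
  fixes A B :: "'a::real_inner"
  assumes A0: "A \<noteq> 0" and r0: "0 \<le> r" and r1: "r < 1" and d: "norm (B - A) \<le> r * norm A"
  shows "B \<noteq> 0 \<and> vec_angle A B \<le> arcsin r"
proof -
  define D where "D = B - A"
  have BD: "B = A + D" by (simp add: D_def)
  have nA: "norm A > 0" using A0 by simp
  have "norm B \<ge> norm A - norm D" using BD norm_triangle_ineq4[of A "-D"]
    by (metis add_diff_cancel_left' diff_le_eq norm_diff_triangle_ineq norm_minus_commute norm_triangle_ineq2 add.commute)
  moreover have "norm D \<le> r * norm A" using d D_def by simp
  ultimately have "norm B \<ge> (1 - r) * norm A" by (simp add: algebra_simps)
  moreover have "(1 - r) * norm A > 0" using r1 nA by simp
  ultimately have nB: "norm B > 0" by linarith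
  hence B0: "B \<noteq> 0" by simp
  define s where "s = inner A A"
  define p where "p = inner A D"
  define q where "q = inner D D"
  have s: "s = (norm A)^2" by (simp add: s_def power2_norm_eq_inner)
  have q: "q = (norm D)^2" by (simp add: q_def power2_norm_eq_inner)
  have nB2: "(norm B)^2 = s + 2*p + q"
    by (simp add: power2_norm_eq_inner BD s_def p_def q_def inner_add_left inner_add_right inner_commute)
  have x: "inner A B = s + p" by (simp add: BD s_def p_def inner_add_right)
  have cs: "p^2 \<le> s * q"
  proof -
    have "\<bar>p\<bar> \<le> norm A * norm D" unfolding p_def by (rule Cauchy_Schwarz_ineq2)
    hence "p^2 \<le> (norm A * norm D)^2"
      by (metis abs_ge_zero power2_abs power_mono)
    thus ?thesis by (simp add: s q power_mult_distrib)
  qed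
  have qr: "q \<le> r^2 * s"
  proof -
    have "norm D \<le> r * norm A" using d D_def by simp
    hence "(norm D)^2 \<le> (r * norm A)^2" by (simp add: power_mono)
    thus ?thesis by (simp add: s q power_mult_distrib)
  qed
  have spos: "s > 0" using s nA by simp
  have Bsq: "s + 2*p + q \<ge> 0" using nB2 by (metis zero_le_power2)
  have key: "(s+p)^2 \<ge> (1 - r^2) * s * (s + 2*p + q)"
  proof -
    have "r^2 * s * (s+2*p+q) \<ge> q * (s+2*p+q)"
      using mult_right_mono[OF qr Bsq] by (simp add: algebra_simps)
    hence "(s+p)^2 - (1 - r^2) * s * (s + 2*p + q) \<ge> p^2 - s*q + q*(s+2*p+q)"
      by (simp add: power2_eq_square algebra_simps)
    also have "p^2 - s*q + q*(s+2*p+q) = (p+q)^2" by (simp add: power2_eq_square algebra_simps)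
    finally show ?thesis using zero_le_power2[of "p+q"] by linarith
  qed
  have xpos: "s + p \<ge> 0"
  proof -
    have "p^2 \<le> s^2" using cs qr r1 r0 spos
    proof -
      have "r^2 \<le> 1" using r0 r1 by (simp add: power_le_one)
      hence "s * q \<le> s * (r^2 * s)" using qr spos by (simp add: mult_left_mono)
      also have "\<dots> \<le> s * s" using \<open>r^2 \<le> 1\<close> spos by (simp add: mult_left_mono mult_right_le_one_le)
      finally show ?thesis using cs by (simp add: power2_eq_square)
    qed
    hence "\<bar>p\<bar> \<le> s" using spos by (metis abs_le_square_iff abs_of_pos)
    thus ?thesis by linarith
  qed
  define c where "c = inner A B / (norm A * norm B)"
  have r21: "0 \<le> 1 - r^2" using r0 r1 by (simp add: power_le_one)
  have "sqrt (1 - r^2) * (norm A * norm B) \<le> inner A B"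
  proof -
    have "(sqrt (1 - r^2) * (norm A * norm B))^2 = (1 - r^2) * s * (s + 2*p + q)"
    proof -
      have eq: "(norm B)^2 = (norm A)^2 + 2*p + q" using nB2 s by simp
      show ?thesis using r21 by (simp add: power_mult_distrib s eq)
    qed
    also have "\<dots> \<le> (inner A B)^2" using key x by simp
    finally show ?thesis using xpos x power2_le_imp_le by metis
  qed
  hence c1: "sqrt (1 - r^2) \<le> c" unfolding c_def using nA nB by (simp add: field_simps)
  have c2: "c \<le> 1"
  proof -
    have "inner A B \<le> norm A * norm B" by (rule Cauchy_Schwarz_ineq2[THEN abs_le_D1])
    thus ?thesis unfolding c_def using nA nB by simp
  qed
  have "-1 \<le> sqrt (1 - r^2)" using r21 by (meson neg_le_0_iff_le order_trans real_sqrt_ge_zero zero_le_one)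
  hence "arccos c \<le> arccos (sqrt (1 - r^2))" using arccos_le_arccos c1 c2 by blast
  also have "\<dots> = arcsin r" using arcsin_arccos_sqrt_pos[of r] r0 r1 by simp
  finally show ?thesis using B0 by (simp add: vec_angle_def c_def)
qed

theorem lemma4p2:
  fixes a b :: "nat \<Rightarrow> complex" and n :: nat and \<epsilon> \<tau> :: real
  assumes "n \<ge> 1"
    and "\<And>i. i \<in> {1..n} \<Longrightarrow> a i \<noteq> 0"
    and "0 < \<epsilon>" and "\<epsilon> < \<tau>" and "\<tau> < 1"
    and "\<And>i. i \<in> {1..n} \<Longrightarrow> cmod (b i / a i - 1) \<le> \<epsilon>"
    and "cmod (\<Sum>i=1..n. a i) \<ge> \<tau> * (\<Sum>i=1..n. cmod (a i))"
  shows "(\<Sum>i=1..n. a i) \<noteq> 0 \<and> (\<Sum>i=1..n. b i) \<noteq> 0 \<and>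
         vec_angle (\<Sum>i=1..n. a i) (\<Sum>i=1..n. b i) \<le> arcsin (\<epsilon> / \<tau>)"
proof -
  define S where "S = (\<Sum>i=1..n. cmod (a i))"
  have tpos: "\<tau> > 0" using assms by linarith
  have "cmod (a 1) > 0" using assms(1,2) by simp
  moreover have "cmod (a 1) \<le> S" unfolding S_def
    using member_le_sum[of 1 "{1..n}" "\<lambda>i. cmod (a i)"] assms(1) by simp
  ultimately have Spos: "S > 0" by linarith
  have A0: "(\<Sum>i=1..n. a i) \<noteq> 0"
  proof
    assume "(\<Sum>i=1..n. a i) = 0"
    hence "\<tau> * S \<le> 0" using assms(7) S_def by simp
    thus False using tpos Spos by (simp add: mult_le_0_iff)
  qed
  have each: "cmod (b i - a i) \<le> \<epsilon> * cmod (a i)" if "i \<in> {1..n}" for i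
  proof -
    have "b i - a i = a i * (b i / a i - 1)" using assms(2)[OF that] by (simp add: field_simps)
    hence "cmod (b i - a i) = cmod (a i) * cmod (b i / a i - 1)" by (simp add: norm_mult)
    thus ?thesis using assms(6)[OF that] mult_left_mono[of "cmod (b i / a i - 1)" "\<epsilon>" "cmod (a i)"]
      by (simp add: mult.commute)
  qed
  have "cmod ((\<Sum>i=1..n. b i) - (\<Sum>i=1..n. a i)) = cmod (\<Sum>i=1..n. b i - a i)"
    by (simp add: sum_subtractf)
  also have "\<dots> \<le> (\<Sum>i=1..n. cmod (b i - a i))" by (rule norm_sum)
  also have "\<dots> \<le> (\<Sum>i=1..n. \<epsilon> * cmod (a i))" by (rule sum_mono) (use each in auto)
  also have "\<dots> = \<epsilon> * S" by (simp add: S_def sum_distrib_left)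
  also have "\<dots> \<le> (\<epsilon> / \<tau>) * cmod (\<Sum>i=1..n. a i)"
  proof -
    have "\<epsilon> * S = (\<epsilon> / \<tau>) * (\<tau> * S)" using tpos by simp
    also have "\<dots> \<le> (\<epsilon> / \<tau>) * cmod (\<Sum>i=1..n. a i)"
      using assms(3,7) tpos S_def by (intro mult_left_mono) auto
    finally show ?thesis .
  qed
  finally have d: "cmod ((\<Sum>i=1..n. b i) - (\<Sum>i=1..n. a i)) \<le> (\<epsilon> / \<tau>) * cmod (\<Sum>i=1..n. a i)" .
  have "0 \<le> \<epsilon> / \<tau>" "\<epsilon> / \<tau> < 1" using assms tpos by auto
  from angle_helper[OF A0 this d] A0 show ?thesis by simp
qed

end
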